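(* Let $X$ be a finite, connected geometric simplicial complex with vertex set $V$, let $q\in[1,\infty)$, and let $f,g: X\to\mathbb{R}$ be functions each obtained from a function on $V$ by extending linearly over the simplices of $X$. Let $p$ be the uniform probability distribution on $V$. Then \[ d^{GW}_q(G_f,G_g) \leq \tfrac{1}{2}\, |V|^{1/q}\, \|f-g\|_{L^q(p)}. \]
   Context: Merge tree: for $f: X\to\mathbb{R}$, declare $x\sim y$ if $f(x)=f(y)=a$ and $x,y$ lie in the same connected component of $f^{-1}(-\infty,a]$; the merge tree is $T_f = X/\!\sim$, with $f$ descending to $T_f$. Let $\pi_f: V\to T_f$ be the restriction of the quotient map to $V$. The LCA matrix $W_f(v,w)$ is the maximum value of $f$ along the unique geodesic path from $\pi_f(v)$ to $\pi_f(w)$ in $T_f$. The measure network is $G_f=(V,p,W_f)$. $\|h\|_{L^q(p)} = (\sum_{v\in V}|h(v)|^q p(v))^{1/q}$. For finite measure networks $G_i=(V_i,p_i,W_i)$, with $\mathcal{C}(p_1,p_2)$ the nonnegative matrices with row sums $p_1$ and column sums $p_2$, $d^{GW}_q(G_1,G_2) = \tfrac12 \min_{C\in\mathcal{C}(p_1,p_2)} (\sum_{i,j,k,l} |W_1(i,k)-W_2(j,l)|^q C_{i,j}C_{k,l})^{1/q}$. *)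

theory Defs
  imports "HOL-Analysis.Analysis"
begin

text \<open>Geometric simplicial complexes are the library's \<open>simplicial_complex\<close>
  (finite set of simplices in a Euclidean space, closed under faces, intersecting in faces).\<close>

definition cplx_space :: "'a::euclidean_space set set \<Rightarrow> 'a set" where
  "cplx_space \<C> = \<Union>\<C>"

definition cplx_vertices :: "'a::euclidean_space set set \<Rightarrow> 'a set" where
  "cplx_vertices \<C> = {v. {v} \<in> \<C>}"

text \<open>A function obtained from a function on the vertices by extending linearly over
  each simplex: on every simplex it agrees with an affine function.\<close>

definition piecewise_linear_on :: "'a::euclidean_space set set \<Rightarrow> ('a \<Rightarrow> real) \<Rightarrow> bool" where
  "piecewise_linear_on \<C> f \<longleftrightarrow> (\<forall>S\<in>\<C>. \<exists>a b. \<forall>x\<in>S. f x = inner a x + b)"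

text \<open>LCA matrix of the merge tree: the f-value of the lowest common ancestor of
  the images of v and w in the merge tree, i.e. the lowest level a such that v and w lie
  in a common connected component of the sublevel set of f restricted to X at level a.\<close>

definition merge_lca :: "'a::topological_space set \<Rightarrow> ('a \<Rightarrow> real) \<Rightarrow> 'a \<Rightarrow> 'a \<Rightarrow> real" where
  "merge_lca X f v w =
     Inf {a. \<exists>C. connected C \<and> C \<subseteq> {x\<in>X. f x \<le> a} \<and> v \<in> C \<and> w \<in> C}"

definition couplings :: "'a set \<Rightarrow> ('a \<Rightarrow> real) \<Rightarrow> 'b set \<Rightarrow> ('b \<Rightarrow> real) \<Rightarrow> ('a \<Rightarrow> 'b \<Rightarrow> real) set" where
  "couplings V1 p1 V2 p2 =
     {C. (\<forall>i j. 0 \<le> C i j) \<and> (\<forall>i j. i \<notin> V1 \<or> j \<notin> V2 \<longrightarrow> C i j = 0) \<and>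
         (\<forall>i\<in>V1. (\<Sum>j\<in>V2. C i j) = p1 i) \<and> (\<forall>j\<in>V2. (\<Sum>i\<in>V1. C i j) = p2 j)}"

definition gw_dist :: "real \<Rightarrow> 'a set \<Rightarrow> ('a \<Rightarrow> real) \<Rightarrow> ('a \<Rightarrow> 'a \<Rightarrow> real)
                      \<Rightarrow> 'b set \<Rightarrow> ('b \<Rightarrow> real) \<Rightarrow> ('b \<Rightarrow> 'b \<Rightarrow> real) \<Rightarrow> real" where
  "gw_dist q V1 p1 W1 V2 p2 W2 =
     1/2 * Inf ((\<lambda>C. (\<Sum>i\<in>V1. \<Sum>j\<in>V2. \<Sum>k\<in>V1. \<Sum>l\<in>V2.
                        \<bar>W1 i k - W2 j l\<bar> powr q * C i j * C k l) powr (1/q))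
                ` couplings V1 p1 V2 p2)"

definition Lq_norm :: "real \<Rightarrow> 'a set \<Rightarrow> ('a \<Rightarrow> real) \<Rightarrow> ('a \<Rightarrow> real) \<Rightarrow> real" where
  "Lq_norm q V p h = (\<Sum>v\<in>V. \<bar>h v\<bar> powr q * p v) powr (1/q)"

end

theory Submission
  imports Defs
begin

lemma lca_shift:
  fixes X :: "'a::topological_space set"
  assumes le: "\<forall>x\<in>X. f x \<le> g x + M"
    and ne: "\<exists>a C. connected C \<and> C \<subseteq> {x\<in>X. g x \<le> a} \<and> v \<in> C \<and> w \<in> C"
  shows "merge_lca X f v w \<le> merge_lca X g v w + M"
proof -
  define Sf where "Sf = {a. \<exists>C. connected C \<and> C \<subseteq> {x\<in>X. f x \<le> a} \<and> v \<in> C \<and> w \<in> C}"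
  define Sg where "Sg = {a. \<exists>C. connected C \<and> C \<subseteq> {x\<in>X. g x \<le> a} \<and> v \<in> C \<and> w \<in> C}"
  have bdd: "bdd_below Sf"
    unfolding Sf_def bdd_below_def by (rule exI[of _ "f v"]) auto
  have neg: "Sg \<noteq> {}" using ne unfolding Sg_def by auto
  have sh: "a + M \<in> Sf" if "a \<in> Sg" for a
  proof -
    from that obtain C where C: "connected C" "C \<subseteq> {x\<in>X. g x \<le> a}" "v \<in> C" "w \<in> C"
      unfolding Sg_def by auto
    have "C \<subseteq> {x\<in>X. f x \<le> a + M}" using C(2) le by force
    then show ?thesis unfolding Sf_def using C by auto
  qed
  have "Inf Sf - M \<le> Inf Sg"
  proof (rule cInf_greatest[OF neg])
    fix a assume "a \<in> Sg"
    then have "Inf Sf \<le> a + M" using cInf_lower[OF sh bdd] by auto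
    then show "Inf Sf - M \<le> a" by simp
  qed
  then show ?thesis unfolding merge_lca_def Sf_def Sg_def by simp
qed

lemma pl_bounded:
  assumes "simplicial_complex \<C>" "piecewise_linear_on \<C> f"
  shows "\<exists>B. \<forall>x\<in>cplx_space \<C>. \<bar>f x\<bar> \<le> B"
proof -
  have fin: "finite \<C>" using assms(1) unfolding simplicial_complex_def by auto
  have "bounded (f ` S)" if "S \<in> \<C>" for S
  proof -
    have "\<exists>n. n simplex S" using assms(1) that unfolding simplicial_complex_def by auto
    then obtain n where "n simplex S" by blast
    then have cS: "compact S" by (rule compact_simplex)
    have "\<exists>a b. \<forall>x\<in>S. f x = inner a x + b"
      using assms(2) that unfolding piecewise_linear_on_def by auto
    then obtain a b where ab: "\<forall>x\<in>S. f x = inner a x + b" by blast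
    have "f ` S = (\<lambda>x. inner a x + b) ` S" using ab by auto
    moreover have "compact ((\<lambda>x. inner a x + b) ` S)"
      by (intro compact_continuous_image cS continuous_intros)
    ultimately show ?thesis using compact_imp_bounded by metis
  qed
  then have "bounded (\<Union>S\<in>\<C>. f ` S)" using fin by auto
  moreover have "f ` cplx_space \<C> = (\<Union>S\<in>\<C>. f ` S)" unfolding cplx_space_def by auto
  ultimately have "\<exists>B. \<forall>y\<in>f ` cplx_space \<C>. \<bar>y\<bar> \<le> B" by (simp add: bounded_real)
  then show ?thesis by auto
qed

lemma pl_vertex_bound:
  assumes "simplicial_complex \<C>" "piecewise_linear_on \<C> f" "piecewise_linear_on \<C> g"
    and V: "\<forall>v\<in>cplx_vertices \<C>. \<bar>f v - g v\<bar> \<le> M"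
    and x: "x \<in> cplx_space \<C>"
  shows "\<bar>f x - g x\<bar> \<le> M"
proof -
  obtain S where S: "S \<in> \<C>" "x \<in> S" using x unfolding cplx_space_def by auto
  have "\<exists>n. n simplex S" using assms(1) S unfolding simplicial_complex_def by auto
  then obtain n where "n simplex S" by blast
  then have cS: "compact S" "convex S" by (auto intro: compact_simplex convex_simplex)
  have "\<exists>a b. \<forall>x\<in>S. f x = inner a x + b"
    using assms(2) S unfolding piecewise_linear_on_def by auto
  then obtain a1 b1 where ab1: "\<forall>x\<in>S. f x = inner a1 x + b1" by blast
  have "\<exists>a b. \<forall>x\<in>S. g x = inner a x + b"
    using assms(3) S unfolding piecewise_linear_on_def by auto
  then obtain a2 b2 where ab2: "\<forall>x\<in>S. g x = inner a2 x + b2" by blast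
  define E where "E = {x. x extreme_point_of S}"
  have Ehull: "S = convex hull E" unfolding E_def by (rule Krein_Milman_Minkowski[OF cS])
  define T where "T = {y. inner (a1 - a2) y \<le> M - (b1 - b2)} \<inter> {y. inner (a1 - a2) y \<ge> - M - (b1 - b2)}"
  have cT: "convex T" unfolding T_def by (intro convex_Int convex_halfspace_le convex_halfspace_ge)
  have ET: "E \<subseteq> T"
  proof
    fix e assume e: "e \<in> E"
    then have "{e} face_of S" unfolding E_def by (simp add: face_of_singleton)
    then have "{e} \<in> \<C>" using assms(1) S unfolding simplicial_complex_def by auto
    then have "\<bar>f e - g e\<bar> \<le> M" using V unfolding cplx_vertices_def by auto
    moreover have "e \<in> S" using e unfolding E_def extreme_point_of_def by auto
    ultimately show "e \<in> T" using ab1 ab2 unfolding T_def by (auto simp: inner_diff_left)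
  qed
  have "S \<subseteq> T" using Ehull hull_minimal[of E T convex, OF ET cT] by simp
  then have "x \<in> T" using S by auto
  then show ?thesis using ab1 ab2 S unfolding T_def by (auto simp: inner_diff_left)
qed

theorem mainTheorem2:
  fixes \<C> :: "'a::euclidean_space set set" and f g :: "'a \<Rightarrow> real" and q :: real
  assumes "simplicial_complex \<C>"
    and "connected (cplx_space \<C>)"
    and "1 \<le> q"
    and "piecewise_linear_on \<C> f"
    and "piecewise_linear_on \<C> g"
  shows "gw_dist q
           (cplx_vertices \<C>) (\<lambda>_. 1 / real (card (cplx_vertices \<C>))) (merge_lca (cplx_space \<C>) f)
           (cplx_vertices \<C>) (\<lambda>_. 1 / real (card (cplx_vertices \<C>))) (merge_lca (cplx_space \<C>) g)
         \<le> 1/2 * real (card (cplx_vertices \<C>)) powr (1/q)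
               * Lq_norm q (cplx_vertices \<C>) (\<lambda>_. 1 / real (card (cplx_vertices \<C>))) (\<lambda>v. f v - g v)"
proof -
  define V where "V = cplx_vertices \<C>"
  define X where "X = cplx_space \<C>"
  define n where "n = card V"
  define h where "h = (\<lambda>v. \<bar>f v - g v\<bar> powr q)"
  define M where "M = (\<Sum>v\<in>V. h v) powr (1/q)"
  have q0: "q > 0" using assms(3) by simp
  have finC: "finite \<C>" using assms(1) unfolding simplicial_complex_def by auto
  have finV: "finite V"
  proof -
    have "(\<lambda>v. {v}) ` V \<subseteq> \<C>" unfolding V_def cplx_vertices_def by auto
    then have "finite ((\<lambda>v. {v}) ` V)" using finC finite_subset by blast
    then show ?thesis by (rule finite_imageD) (auto simp: inj_on_def)
  qed
  have VX: "V \<subseteq> X" unfolding V_def X_def cplx_vertices_def cplx_space_def by auto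
  have M0: "M \<ge> 0" unfolding M_def by simp
  have hM: "\<bar>f v - g v\<bar> \<le> M" if "v \<in> V" for v
  proof -
    have "h v \<le> (\<Sum>v\<in>V. h v)" using finV that by (intro member_le_sum) (auto simp: h_def)
    then have "h v powr (1/q) \<le> M" unfolding M_def by (intro powr_mono2) (auto simp: h_def q0 less_imp_le)
    moreover have "h v powr (1/q) = \<bar>f v - g v\<bar>" unfolding h_def using q0
      by (simp add: powr_powr)
    ultimately show ?thesis by simp
  qed
  have hX: "\<bar>f x - g x\<bar> \<le> M" if "x \<in> X" for x
    using pl_vertex_bound[OF assms(1,4,5)] hM that unfolding V_def X_def by blast
  obtain Bf where Bf: "\<forall>x\<in>X. \<bar>f x\<bar> \<le> Bf" using pl_bounded[OF assms(1,4)] unfolding X_def by auto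
  obtain Bg where Bg: "\<forall>x\<in>X. \<bar>g x\<bar> \<le> Bg" using pl_bounded[OF assms(1,5)] unfolding X_def by auto
  have conX: "connected X" using assms(2) unfolding X_def .
  have W: "\<bar>merge_lca X f v w - merge_lca X g v w\<bar> \<le> M" if "v \<in> V" "w \<in> V" for v w
  proof -
    have neg: "\<exists>a C. connected C \<and> C \<subseteq> {x\<in>X. g x \<le> a} \<and> v \<in> C \<and> w \<in> C"
      using conX Bg that VX by (intro exI[of _ Bg] exI[of _ X]) auto
    have nef: "\<exists>a C. connected C \<and> C \<subseteq> {x\<in>X. f x \<le> a} \<and> v \<in> C \<and> w \<in> C"
      using conX Bf that VX by (intro exI[of _ Bf] exI[of _ X]) auto
    have 1: "merge_lca X f v w \<le> merge_lca X g v w + M"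
      by (rule lca_shift[OF _ neg]) (use hX in force)
    have 2: "merge_lca X g v w \<le> merge_lca X f v w + M"
      by (rule lca_shift[OF _ nef]) (use hX in force)
    show ?thesis using 1 2 by linarith
  qed
  define p where "p = (\<lambda>_::'a. 1 / real n)"
  define D where "D = (\<lambda>i j. if i \<in> V \<and> j = i then 1 / real n else 0)"
  have Dc: "D \<in> couplings V p V p"
    unfolding couplings_def D_def p_def using finV by auto
  define F where "F = (\<lambda>C. (\<Sum>i\<in>V. \<Sum>j\<in>V. \<Sum>k\<in>V. \<Sum>l\<in>V.
                        \<bar>merge_lca X f i k - merge_lca X g j l\<bar> powr q * C i j * C k l) powr (1/q))"
  have D0: "D i j \<ge> 0" for i j unfolding D_def by auto
  have sumD: "(\<Sum>i\<in>V. \<Sum>j\<in>V. D i j) \<le> 1"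
  proof -
    have "(\<Sum>i\<in>V. \<Sum>j\<in>V. D i j) = (\<Sum>i\<in>V. 1 / real n)"
      using finV by (intro sum.cong) (auto simp: D_def)
    also have "\<dots> \<le> 1" unfolding n_def by (cases "card V = 0") auto
    finally show ?thesis .
  qed
  have trm: "\<bar>merge_lca X f i k - merge_lca X g j l\<bar> powr q * D i j * D k l \<le> M powr q * D i j * D k l"
    if "i \<in> V" "k \<in> V" for i j k l
  proof (cases "j = i \<and> l = k")
    case True
    then show ?thesis using W[OF that] D0
      by (intro mult_right_mono powr_mono2) (auto simp: q0 less_imp_le)
  next
    case False
    then show ?thesis unfolding D_def by auto
  qed
  have "(\<Sum>i\<in>V. \<Sum>j\<in>V. \<Sum>k\<in>V. \<Sum>l\<in>V.
          \<bar>merge_lca X f i k - merge_lca X g j l\<bar> powr q * D i j * D k l)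
        \<le> (\<Sum>i\<in>V. \<Sum>j\<in>V. \<Sum>k\<in>V. \<Sum>l\<in>V. M powr q * D i j * D k l)"
    by (intro sum_mono trm)
  also have "\<dots> = M powr q * (\<Sum>i\<in>V. \<Sum>j\<in>V. D i j) * (\<Sum>k\<in>V. \<Sum>l\<in>V. D k l)"
    by (simp add: sum_distrib_left sum_distrib_right mult_ac)
  also have "\<dots> \<le> M powr q * 1 * 1"
    using sumD by (intro mult_mono) (auto intro: sum_nonneg D0)
  finally have S: "(\<Sum>i\<in>V. \<Sum>j\<in>V. \<Sum>k\<in>V. \<Sum>l\<in>V.
          \<bar>merge_lca X f i k - merge_lca X g j l\<bar> powr q * D i j * D k l) \<le> M powr q" by simp
  have FD: "F D \<le> M"
  proof -
    have "F D \<le> (M powr q) powr (1/q)" unfolding F_def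
      by (intro powr_mono2 S) (auto simp: q0 less_imp_le intro!: sum_nonneg mult_nonneg_nonneg D0)
    also have "\<dots> = M" using M0 q0 by (simp add: powr_powr)
    finally show ?thesis .
  qed
  have bdd: "bdd_below (F ` couplings V p V p)"
    unfolding F_def bdd_below_def by (rule exI[of _ 0]) auto
  have gw: "gw_dist q V p (merge_lca X f) V p (merge_lca X g) \<le> 1/2 * M"
  proof -
    have "Inf (F ` couplings V p V p) \<le> F D" by (rule cInf_lower[OF _ bdd]) (use Dc in auto)
    then show ?thesis using FD unfolding gw_dist_def F_def by simp
  qed
  have rhs: "1/2 * real n powr (1/q) * Lq_norm q V p (\<lambda>v. f v - g v) = 1/2 * M"
  proof (cases "n = 0")
    case True
    then have "V = {}" using finV unfolding n_def by simp
    then show ?thesis unfolding M_def Lq_norm_def using True q0 by simp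
  next
    case False
    have "(\<Sum>v\<in>V. \<bar>f v - g v\<bar> powr q * p v) = (\<Sum>v\<in>V. h v) / real n"
      unfolding p_def h_def by (simp add: sum_divide_distrib)
    then have "real n powr (1/q) * Lq_norm q V p (\<lambda>v. f v - g v)
        = real n powr (1/q) * ((\<Sum>v\<in>V. h v) / real n) powr (1/q)" unfolding Lq_norm_def by simp
    also have "\<dots> = (real n * ((\<Sum>v\<in>V. h v) / real n)) powr (1/q)"
      by (subst powr_mult) (auto simp: h_def intro!: sum_nonneg)
    also have "\<dots> = M" unfolding M_def using False by simp
    finally show ?thesis by simp
  qed
  show ?thesis using gw rhs unfolding V_def X_def n_def p_def by simp
qed

end
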